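(* Let $U$ be a two-qubit unitary written as $$U=(u_A\otimes u_B)\exp\!\Big(i\sum_{k=1}^3 t_k\,\sigma_k\otimes\sigma_k\Big)(v_A^\dagger\otimes v_B^\dagger),$$ with $u_A,u_B,v_A,v_B$ single-qubit unitaries, $t_1,t_2,t_3\in\mathbb R$, and $\sigma_1,\sigma_2,\sigma_3$ the Pauli matrices. Then $U$ is a generalized thermal unitary if and only if there exist $j\neq k$ in $\{1,2,3\}$ with $(t_j-t_k)\bmod(\pi/2)=0$ or $(t_j+t_k)\bmod(\pi/2)=0$.
   Context: A unitary $U$ on $\mathcal H_A\otimes\mathcal H_B$ is a generalized thermal unitary if there exist Hermitian operators $H_A,H_A'$ on $\mathcal H_A$ and $H_B,H_B'$ on $\mathcal H_B$, with at least one of $H_A,H_B$ not proportional to the identity, such that $U(H_A\otimes\mathbb 1+\mathbb 1\otimes H_B)U^\dagger=H_A'\otimes\mathbb 1+\mathbb 1\otimes H_B'$. Here $\mathcal H_A=\mathcal H_B=\mathbb C^2$. *)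

theory Defs
  imports "HOL-Analysis.Analysis"
begin

type_synonym qmat = "complex^2^2"
type_synonym qqmat = "complex^(2\<times>2)^(2\<times>2)"

definition cadj :: "complex^'n^'n \<Rightarrow> complex^'n^'n" where
  "cadj A = (\<chi> i j. cnj (A $ j $ i))"

definition hermitian :: "complex^'n^'n \<Rightarrow> bool" where
  "hermitian A \<longleftrightarrow> cadj A = A"

definition unitary :: "complex^'n^'n \<Rightarrow> bool" where
  "unitary U \<longleftrightarrow> U ** cadj U = mat 1 \<and> cadj U ** U = mat 1"

definition cscale :: "complex \<Rightarrow> complex^'n^'m \<Rightarrow> complex^'n^'m" where
  "cscale c A = (\<chi> i j. c * A $ i $ j)"

definition prop_id :: "complex^'n^'n \<Rightarrow> bool" where
  "prop_id A \<longleftrightarrow> (\<exists>c. A = cscale c (mat 1))"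

definition kron :: "complex^'a^'a \<Rightarrow> complex^'b^'b \<Rightarrow> complex^('a\<times>'b)^('a\<times>'b)" where
  "kron A B = (\<chi> p q. A $ fst p $ fst q * B $ snd p $ snd q)"

primrec mpow :: "complex^'n^'n \<Rightarrow> nat \<Rightarrow> complex^'n^'n" where
  "mpow A 0 = mat 1"
| "mpow A (Suc m) = A ** mpow A m"

definition mexp :: "complex^'n^'n \<Rightarrow> complex^'n^'n" where
  "mexp A = (\<chi> i j. (\<Sum>m. mpow A m $ i $ j / of_nat (fact m)))"

definition pauli :: "nat \<Rightarrow> complex^2^2" where
  "pauli k = (\<chi> i j.
     if k = 1 then (if i \<noteq> j then 1 else 0)
     else if k = 2 then (if i = 0 \<and> j = 1 then - \<i> else if i = 1 \<and> j = 0 then \<i> else 0)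
     else (if i = 0 \<and> j = 0 then 1 else if i = 1 \<and> j = 1 then -1 else 0))"

definition gen_thermal_unitary :: "complex^('a::finite\<times>'b::finite)^('a\<times>'b) \<Rightarrow> bool" where
  "gen_thermal_unitary U \<longleftrightarrow> unitary U \<and>
     (\<exists>HA HA' :: complex^'a^'a. \<exists>HB HB' :: complex^'b^'b.
        hermitian HA \<and> hermitian HA' \<and> hermitian HB \<and> hermitian HB' \<and>
        (\<not> prop_id HA \<or> \<not> prop_id HB) \<and>
        U ** (kron HA (mat 1) + kron (mat 1) HB) ** cadj U
          = kron HA' (mat 1) + kron (mat 1) HB')"

end

theory Submission imports Defs begin

lemma UNIV2': "(UNIV::2 set) = {0,1}"
  using exhaust_2 by (metis UNIV_2 zero_neq_one_class.zero_neq_one insert_commute) 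

lemma forall2': "(\<forall>i::2. P i) \<longleftrightarrow> P 0 \<and> P 1"
  by (metis UNIV2' UNIV_I insertE singletonD)

lemma sum2': "sum f (UNIV::2 set) = f 0 + f 1"
  unfolding UNIV2' by simp

lemma zero_ne_one2 [simp]: "(0::2) \<noteq> 1" "(1::2) \<noteq> 0" by simp_all

lemma UNIV22: "(UNIV::(2\<times>2) set) = {(0,0),(0,1),(1,0),(1,1)}"
  by (auto simp: UNIV2' simp flip: UNIV_Times_UNIV)

lemma sum22: "sum f (UNIV::(2\<times>2) set) = f (0,0) + f (0,1) + f (1,0) + f (1,1)"
  unfolding UNIV22 by (simp add: add.assoc)

lemma forall22: "(\<forall>i::2\<times>2. P i) \<longleftrightarrow> P (0,0) \<and> P (0,1) \<and> P (1,0) \<and> P(1,1)"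
  by (metis UNIV22 UNIV_I empty_iff insertE)

lemma mat_eq22: "(A::complex^(2\<times>2)^(2\<times>2)) = B \<longleftrightarrow> 
  (\<forall>i j. i \<in> {(0,0),(0,1),(1,0),(1,1)} \<longrightarrow> j \<in> {(0,0),(0,1),(1,0),(1,1)} \<longrightarrow> A$i$j = B$i$j)"
  by (auto simp: vec_eq_iff UNIV22[symmetric])

definition bk1 :: "2\<times>2 \<Rightarrow> 2\<times>2 \<Rightarrow> complex" where
  "bk1 p q = (if fst p = snd p \<and> fst q = snd q then 1/2 else 0)"
definition bk2 :: "2\<times>2 \<Rightarrow> 2\<times>2 \<Rightarrow> complex" where
  "bk2 p q = (if fst p = snd p \<and> fst q = snd q then (if p = q then 1/2 else -1/2) else 0)"
definition bk3 :: "2\<times>2 \<Rightarrow> 2\<times>2 \<Rightarrow> complex" where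
  "bk3 p q = (if fst p \<noteq> snd p \<and> fst q \<noteq> snd q then 1/2 else 0)"
definition bk4 :: "2\<times>2 \<Rightarrow> 2\<times>2 \<Rightarrow> complex" where
  "bk4 p q = (if fst p \<noteq> snd p \<and> fst q \<noteq> snd q then (if p = q then 1/2 else -1/2) else 0)"

definition bd :: "complex \<Rightarrow> complex \<Rightarrow> complex \<Rightarrow> complex \<Rightarrow> qqmat" where
  "bd x1 x2 x3 x4 = (\<chi> p q. bk1 p q * x1 + bk2 p q * x2 + bk3 p q * x3 + bk4 p q * x4)"

lemmas bk_defs = bk1_def bk2_def bk3_def bk4_def

lemma bd_old: "bd x1 x2 x3 x4 = (\<chi> p q. if p = q then (if fst p = snd p then (x1+x2)/2 else (x3+x4)/2)
     else if fst p \<noteq> fst q \<and> snd p \<noteq> snd q then (if fst p = snd p then (x1-x2)/2 else (x3-x4)/2) else 0)"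
  unfolding mat_eq22 bd_def bk_defs by (simp add: add_divide_distrib diff_divide_distrib)

lemma mat_eqI: "A$(0,0)$(0,0) = B$(0,0)$(0,0) \<Longrightarrow> A$(0,0)$(0,1) = B$(0,0)$(0,1) \<Longrightarrow> A$(0,0)$(1,0) = B$(0,0)$(1,0) \<Longrightarrow> A$(0,0)$(1,1) = B$(0,0)$(1,1) \<Longrightarrow> A$(0,1)$(0,0) = B$(0,1)$(0,0) \<Longrightarrow> A$(0,1)$(0,1) = B$(0,1)$(0,1) \<Longrightarrow> A$(0,1)$(1,0) = B$(0,1)$(1,0) \<Longrightarrow> A$(0,1)$(1,1) = B$(0,1)$(1,1) \<Longrightarrow> A$(1,0)$(0,0) = B$(1,0)$(0,0) \<Longrightarrow> A$(1,0)$(0,1) = B$(1,0)$(0,1) \<Longrightarrow> A$(1,0)$(1,0) = B$(1,0)$(1,0) \<Longrightarrow> A$(1,0)$(1,1) = B$(1,0)$(1,1) \<Longrightarrow> A$(1,1)$(0,0) = B$(1,1)$(0,0) \<Longrightarrow> A$(1,1)$(0,1) = B$(1,1)$(0,1) \<Longrightarrow> A$(1,1)$(1,0) = B$(1,1)$(1,0) \<Longrightarrow> A$(1,1)$(1,1) = B$(1,1)$(1,1) \<Longrightarrow> (A::complex^(2\<times>2)^(2\<times>2)) = B"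
  unfolding mat_eq22 by auto

lemma bd_mult: "bd x1 x2 x3 x4 ** bd y1 y2 y3 y4 = bd (x1*y1) (x2*y2) (x3*y3) (x4*y4)"
  by (rule mat_eqI) (simp_all add: bd_old matrix_matrix_mult_def sum22 field_simps)
lemma bd_one: "mat 1 = bd 1 1 1 1"
  by (rule mat_eqI) (simp_all add: bd_old mat_def)

lemma cadj_bd: "cadj (bd x1 x2 x3 x4) = bd (cnj x1) (cnj x2) (cnj x3) (cnj x4)"
  by (rule mat_eqI) (simp_all add: bd_old cadj_def)

lemma mpow_bd: "mpow (bd x1 x2 x3 x4) m = bd (x1^m) (x2^m) (x3^m) (x4^m)"
  by (induction m) (simp_all add: bd_one bd_mult)

lemma exp_sums: "(\<lambda>n. (x::complex)^n / of_nat (fact n)) sums exp x"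
  using exp_converges[of x] by (simp add: scaleR_conv_of_real divide_inverse mult.commute)

lemma H_bd: "(\<Sum>k\<in>{1..3}. cscale (\<i> * complex_of_real (t k)) (kron (pauli k) (pauli k)))
  = bd (\<i> * (t 1 - t 2 + t 3)) (\<i> * (- t 1 + t 2 + t 3)) (\<i> * (t 1 + t 2 - t 3)) (\<i> * (- t 1 - t 2 - t 3))"
proof -
  have s: "{1..3::nat} = {1,2,3}" by auto
  show ?thesis unfolding s
    apply (rule mat_eqI)
    apply (simp_all add: bd_old cscale_def kron_def pauli_def)
    apply (simp_all add: algebra_simps)
    done
qed

lemma mexp_bd: "mexp (bd x1 x2 x3 x4) = bd (exp x1) (exp x2) (exp x3) (exp x4)"
proof -
  have e: "(\<Sum>m. bd (x1^m) (x2^m) (x3^m) (x4^m) $ p $ q / of_nat (fact m)) = bd (exp x1) (exp x2) (exp x3) (exp x4) $ p $ q" for p q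
  proof -
    have h: "\<And>x1 x2 x3 x4. bd x1 x2 x3 x4 $ p $ q = bk1 p q*x1+bk2 p q*x2+bk3 p q*x3+bk4 p q*x4"
      unfolding bd_def by simp
    have "(\<lambda>m. bd (x1^m) (x2^m) (x3^m) (x4^m) $ p $ q / of_nat (fact m)) sums
       (bk1 p q*exp x1+bk2 p q*exp x2+bk3 p q*exp x3+bk4 p q*exp x4)"
      unfolding h add_divide_distrib times_divide_eq_right[symmetric]
      by (intro sums_add sums_mult exp_sums)
    then show ?thesis unfolding h[of "exp x1"] by (rule sums_unique[symmetric])
  qed
  show ?thesis unfolding mexp_def mpow_bd vec_eq_iff vec_lambda_beta by (intro allI e)
qed

lemma matrix_add_rdistrib': "((B + C) ** A) = (B ** A) + (C ** A)"
  by (vector matrix_matrix_mult_def sum.distrib[symmetric] field_simps)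

lemma cadj_mult: "cadj (A ** B) = cadj B ** cadj (A::complex^'n^'n)"
  by (simp add: vec_eq_iff cadj_def matrix_matrix_mult_def mult.commute)

lemma cadj_cadj[simp]: "cadj (cadj A) = A"
  by (simp add: vec_eq_iff cadj_def)

lemma cadj_add: "cadj (A + B) = cadj A + cadj B"
  by (simp add: vec_eq_iff cadj_def)

lemma cadj_mat: "cadj (mat (of_real r) :: complex^'n^'n) = mat (of_real r)"
  by (simp add: vec_eq_iff cadj_def mat_def)

lemma cadj_mat1[simp]: "cadj (mat 1 :: complex^'n^'n) = mat 1"
  using cadj_mat[of 1] by simp

lemma hermitian_conj: "hermitian K \<Longrightarrow> hermitian (V ** K ** cadj V)"
  unfolding hermitian_def by (simp add: cadj_mult matrix_mul_assoc)

lemma hermitian_add: "hermitian A \<Longrightarrow> hermitian B \<Longrightarrow> hermitian (A + B)"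
  unfolding hermitian_def by (simp add: cadj_add)

lemma cadj_kron: "cadj (kron A B) = kron (cadj A) (cadj B)"
  by (simp add: vec_eq_iff cadj_def kron_def)

lemma hermitian_kron: "hermitian A \<Longrightarrow> hermitian B \<Longrightarrow> hermitian (kron A B)"
  unfolding hermitian_def by (simp add: cadj_kron)

lemma hermitian_mat1: "hermitian (mat 1 :: complex^'n^'n)"
  unfolding hermitian_def by simp

lemma cscale_mult_left: "cscale c A ** B = cscale c (A ** B)"
  by (simp add: vec_eq_iff cscale_def matrix_matrix_mult_def sum_distrib_left mult.assoc)

lemma cscale_mult_right: "A ** cscale c B = cscale c (A ** B)"
  by (simp add: vec_eq_iff cscale_def matrix_matrix_mult_def sum_distrib_left mult.left_commute)

(* magic basis *)
definition qv :: "2\<times>2 \<Rightarrow> 2\<times>2 \<Rightarrow> complex" where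
  "qv a k = (if k = (0,0) then (if a=(0,0) \<or> a=(1,1) then 1 else 0)
     else if k=(0,1) then (if a = (0,0) then \<i> else if a=(1,1) then -\<i> else 0)
     else if k=(1,0) then (if a=(0,1) \<or> a=(1,0) then \<i> else 0)
     else (if a=(0,1) then 1 else if a=(1,0) then -1 else 0))"

definition Qm :: qqmat where "Qm = (\<chi> a k. qv a k)"
definition Qh :: qqmat where "Qh = (\<chi> a k. qv a k / 2)"

definition dsel :: "complex \<Rightarrow> complex \<Rightarrow> complex \<Rightarrow> complex \<Rightarrow> 2\<times>2 \<Rightarrow> complex" where
  "dsel d1 d2 d3 d4 a = (if a = (0,0) then d1 else if a = (0,1) then d2 else if a = (1,0) then d3 else d4)"

definition dg :: "complex \<Rightarrow> complex \<Rightarrow> complex \<Rightarrow> complex \<Rightarrow> qqmat" where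
  "dg d1 d2 d3 d4 = (\<chi> a b. if a = b then dsel d1 d2 d3 d4 a else 0)"

definition mg :: "qqmat \<Rightarrow> qqmat" where "mg X = cadj Qh ** X ** Qm"

lemma QhQm: "cadj Qh ** Qm = mat 1"
  by (rule mat_eqI) (simp_all add: Qh_def Qm_def qv_def cadj_def matrix_matrix_mult_def sum22 mat_def)

lemma QmQh: "Qm ** cadj Qh = mat 1"
  by (rule mat_eqI) (simp_all add: Qh_def Qm_def qv_def cadj_def matrix_matrix_mult_def sum22 mat_def)

lemma bd_Q: "bd d1 d2 d3 d4 = Qm ** dg d1 d2 d3 d4 ** cadj Qh"
  by (rule mat_eqI) (simp_all add: bd_old Qh_def Qm_def qv_def cadj_def matrix_matrix_mult_def sum22 dg_def dsel_def field_simps)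

lemma mg_conj: "mg (bd d1 d2 d3 d4 ** K ** bd e1 e2 e3 e4) = dg d1 d2 d3 d4 ** mg K ** dg e1 e2 e3 e4"
proof -
  have "mg (bd d1 d2 d3 d4 ** K ** bd e1 e2 e3 e4) = 
    (cadj Qh ** Qm) ** dg d1 d2 d3 d4 ** (cadj Qh ** K ** Qm) ** dg e1 e2 e3 e4 ** (cadj Qh ** Qm)"
    unfolding mg_def bd_Q by (simp add: matrix_mul_assoc)
  then show ?thesis unfolding QhQm mg_def by (simp add: matrix_mul_assoc)
qed

lemma dg_entry: "(dg d1 d2 d3 d4 ** Y ** dg e1 e2 e3 e4) $ a $ b = dsel d1 d2 d3 d4 a * Y $ a $ b * dsel e1 e2 e3 e4 b"
  by (simp add: dg_def matrix_matrix_mult_def if_distrib if_distribR sum.delta' cong: if_cong)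

lemma mg_inv: "Qm ** mg X ** cadj Qh = X"
proof -
  have "Qm ** (cadj Qh ** X ** Qm) ** cadj Qh = (Qm ** cadj Qh) ** X ** (Qm ** cadj Qh)"
    by (simp add: matrix_mul_assoc)
  then show ?thesis unfolding mg_def QmQh by simp
qed


definition locY :: "qqmat \<Rightarrow> bool" where
  "locY Y \<longleftrightarrow> (\<forall>a. Y$a$a = Y$(0,0)$(0,0)) \<and> (\<forall>a b. a \<noteq> b \<longrightarrow> Re (Y$a$b) = 0)"

lemma herm_entry: "hermitian A \<Longrightarrow> A$i$j = cnj (A$j$i)"
  unfolding hermitian_def cadj_def by (metis vec_lambda_beta)

lemma L1:
  fixes A B :: qmat
  assumes hA: "hermitian A" and hB: "hermitian B"
  shows "locY (mg (kron A (mat 1) + kron (mat 1) B))"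
proof -
  have a10: "A$1$0 = cnj (A$0$1)" and b10: "B$1$0 = cnj (B$0$1)"
    using herm_entry hA hB by blast+
  have a00: "Im (A$0$0) = 0" and a11: "Im (A$1$1) = 0" and b00: "Im (B$0$0) = 0" and b11: "Im (B$1$1) = 0"
    using herm_entry[OF hA, of 0 0] herm_entry[OF hA, of 1 1] herm_entry[OF hB, of 0 0] herm_entry[OF hB, of 1 1]
    by (simp_all add: complex_eq_iff)
  show ?thesis unfolding locY_def forall22
    apply (simp add: mg_def Qh_def Qm_def qv_def cadj_def matrix_matrix_mult_def sum22 kron_def mat_def a10 b10 
        complex_eq_iff a00 a11 b00 b11 algebra_simps)
    by (simp add: field_simps)
qed


lemma mat2_eqI: "A$0$0 = B$0$0 \<Longrightarrow> A$0$1 = B$0$1 \<Longrightarrow> A$1$0 = B$1$0 \<Longrightarrow> A$1$1 = B$1$1 \<Longrightarrow> (A::complex^2^2) = B"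
  by (simp add: vec_eq_iff forall2')

lemma pm0: "p + q = 0 \<Longrightarrow> p - q = 0 \<Longrightarrow> p = 0 \<and> q = (0::complex)"
  by (metis add_cancel_right_right diff_add_cancel diff_self eq_iff_diff_eq_0 mult_2 mult_eq_0_iff zero_neq_numeral)

lemma pm0': "q + p = 0 \<Longrightarrow> p - q = 0 \<Longrightarrow> p = 0 \<and> q = (0::complex)"
  using pm0[of p q] by (simp add: add.commute)

lemmas mgsimps = mg_def Qh_def Qm_def qv_def cadj_def matrix_matrix_mult_def sum22 kron_def mat_def

lemma mgK:
  fixes A B :: qmat
  defines "X \<equiv> kron A (mat 1) + kron (mat 1) B"
  shows "mg X $ (0,0) $ (0,1) = \<i>/2 * ((A$0$0 - A$1$1) + (B$0$0 - B$1$1))"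
    "mg X $ (1,0) $ (1,1) = - \<i>/2 * ((A$0$0 - A$1$1) - (B$0$0 - B$1$1))"
    "mg X $ (0,0) $ (1,0) = \<i>/2 * ((A$0$1 + A$1$0) + (B$0$1 + B$1$0))"
    "mg X $ (0,1) $ (1,1) = \<i>/2 * ((A$0$1 + A$1$0) - (B$0$1 + B$1$0))"
    "mg X $ (0,0) $ (1,1) = 1/2 * ((A$1$0 - A$0$1) - (B$1$0 - B$0$1))"
    "mg X $ (0,1) $ (1,0) = - 1/2 * ((A$1$0 - A$0$1) + (B$1$0 - B$0$1))"
  unfolding X_def by (simp_all add: mgsimps algebra_simps) (simp_all add: field_simps)

lemma L1b:
  fixes A B :: qmat
  assumes "\<forall>a b. a \<noteq> b \<longrightarrow> mg (kron A (mat 1) + kron (mat 1) B) $ a $ b = 0"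
  shows "prop_id A \<and> prop_id B"
proof -
  have e: "mg (kron A (mat 1) + kron (mat 1) B) $ a $ b = 0" if "a \<noteq> b" for a b
    using assms that by blast
  have z: "x = 0" if "c * x = 0" "c \<noteq> 0" for c x :: complex using that by simp
  have eq: "(A$0$0 - A$1$1) + (B$0$0 - B$1$1) = 0" "(A$0$0 - A$1$1) - (B$0$0 - B$1$1) = 0"
    "(A$0$1 + A$1$0) + (B$0$1 + B$1$0) = 0" "(A$0$1 + A$1$0) - (B$0$1 + B$1$0) = 0"
    "(A$1$0 - A$0$1) - (B$1$0 - B$0$1) = 0" "(A$1$0 - A$0$1) + (B$1$0 - B$0$1) = 0"
    using e[of "(0,0)" "(0,1)"] e[of "(1,0)" "(1,1)"] e[of "(0,0)" "(1,0)"] e[of "(0,1)" "(1,1)"]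
     e[of "(0,0)" "(1,1)"] e[of "(0,1)" "(1,0)"] unfolding mgK by (auto intro: z)
  note h1 = pm0[OF eq(1,2)] and h2 = pm0[OF eq(3,4)] and h3 = pm0[OF eq(6,5)]
  have "A$0$1 = 0 \<and> A$1$0 = 0" using pm0'[of "A$1$0" "A$0$1"] h2 h3 by simp
  moreover have "B$0$1 = 0 \<and> B$1$0 = 0" using pm0'[of "B$1$0" "B$0$1"] h2 h3 by simp
  ultimately have "A$0$1 = 0" "A$1$0 = 0" "B$0$1 = 0" "B$1$0 = 0" "A$1$1 = A$0$0" "B$1$1 = B$0$0"
    using h1 by simp_all
  then have "A = cscale (A$0$0) (mat 1)" "B = cscale (B$0$0) (mat 1)"
    by (auto intro!: mat2_eqI simp: cscale_def mat_def)
  then show ?thesis unfolding prop_id_def by blast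
qed


lemma cadj_cscale: "cadj (cscale c A) = cscale (cnj c) (cadj (A::complex^'n^'n))"
  by (simp add: vec_eq_iff cadj_def cscale_def)

lemma Qm_Qh: "Qm = cscale 2 Qh"
  by (simp add: vec_eq_iff Qm_def Qh_def cscale_def)

lemma cscale_mat1: "cscale c (mat 1) ** A = cscale c A"
  by (simp add: cscale_mult_left)

lemma mg_herm: "hermitian X \<Longrightarrow> hermitian (mg X)"
  unfolding hermitian_def mg_def
  by (simp add: cadj_mult matrix_mul_assoc Qm_Qh cadj_cscale cscale_mult_left cscale_mult_right)

lemma L3:
  fixes A B :: qmat
  assumes "prop_id A" "prop_id B" "a \<noteq> b"
  shows "mg (kron A (mat 1) + kron (mat 1) B) $ a $ b = 0"
proof -
  obtain c c' where A: "A = cscale c (mat 1)" and B: "B = cscale c' (mat 1)"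
    using assms unfolding prop_id_def by blast
  have "kron A (mat 1) + kron (mat 1) B = cscale (c + c') (mat 1)"
    unfolding A B by (simp add: vec_eq_iff kron_def cscale_def mat_def algebra_simps)
  then have "mg (kron A (mat 1) + kron (mat 1) B) = cscale (c + c') (mat 1)"
    unfolding mg_def by (simp add: cscale_mult_left cscale_mult_right QhQm)
  then show ?thesis using assms(3) by (simp add: cscale_def mat_def)
qed

lemma L2:
  fixes X :: qqmat
  assumes hX: "hermitian X" and lY: "locY (mg X)"
  shows "\<exists>A B. hermitian A \<and> hermitian B \<and> X = kron A (mat 1) + kron (mat 1) B"
proof -
  define Y where "Y = mg X"
  have hY: "Y$a$b = cnj (Y$b$a)" for a b using mg_herm[OF hX] herm_entry unfolding Y_def by blast
  define c where "c = Re (Y$(0,0)$(0,0))"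
  define r where "r a b = Im (Y$a$b)" for a b
  have Yc: "Y = (\<chi> a b. if a = b then complex_of_real c else \<i> * complex_of_real (r a b))"
  proof -
    have "Y$a$b = (if a = b then complex_of_real c else \<i> * complex_of_real (r a b))" for a b
    proof (cases "a = b")
      case True
      then have "Y$a$b = Y$(0,0)$(0,0)" using lY unfolding locY_def Y_def by blast
      moreover have "Im (Y$(0,0)$(0,0)) = 0" using hY[of "(0,0)" "(0,0)"] by (simp add: complex_eq_iff)
      ultimately show ?thesis using True by (simp add: c_def complex_eq_iff)
    next
      case False
      then have "Re (Y$a$b) = 0" using lY unfolding locY_def Y_def by blast
      then show ?thesis using False by (simp add: r_def complex_eq_iff)
    qed
    then show ?thesis by (simp add: vec_eq_iff)
  qed
  have rs: "r b a = - r a b" for a b unfolding r_def using hY[of b a] by simp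
  have XY: "X = Qm ** Y ** cadj Qh" unfolding Y_def by (simp add: mg_inv)
  define A :: qmat where "A = (\<chi> a c. X$(a,0)$(c,0))"
  define B :: qmat where "B = (\<chi> b d. X$(0,b)$(0,d) - (if b = d then X$(0,0)$(0,0) else 0))"
  have hX': "X$i$j = cnj (X$j$i)" for i j using herm_entry[OF hX] .
  have hA: "hermitian A" unfolding hermitian_def A_def cadj_def by (simp add: vec_eq_iff hX'[symmetric])
  have "X$(0,0)$(0,0) = cnj (X$(0,0)$(0,0))" using hX' by blast
  then have hB: "hermitian B" unfolding hermitian_def B_def cadj_def by (auto simp: vec_eq_iff hX'[symmetric])
  have rr: "r (0,1) (0,0) = - r (0,0) (0,1)" "r (1,0) (0,0) = - r (0,0) (1,0)" "r (1,1) (0,0) = - r (0,0) (1,1)"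
    "r (1,0) (0,1) = - r (0,1) (1,0)" "r (1,1) (0,1) = - r (0,1) (1,1)" "r (1,1) (1,0) = - r (1,0) (1,1)"
    using rs by blast+
  have "X = kron A (mat 1) + kron (mat 1) B"
    unfolding A_def B_def XY Yc
    by (rule mat_eqI) (simp_all add: Qh_def Qm_def qv_def cadj_def matrix_matrix_mult_def sum22 kron_def mat_def rr field_simps)
  then show ?thesis using hA hB by blast
qed


lemma dsel_cnj: "dsel (cnj d1) (cnj d2) (cnj d3) (cnj d4) a = cnj (dsel d1 d2 d3 d4 a)"
  by (simp add: dsel_def)

lemma unit_mult_cnj: "cmod z = 1 \<Longrightarrow> z * cnj z = 1"
  using complex_norm_square[of z] by simp

lemma unitary_bd:
  assumes "cmod d1 = 1" "cmod d2 = 1" "cmod d3 = 1" "cmod d4 = 1"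
  shows "unitary (bd d1 d2 d3 d4)"
proof -
  have "cnj z * z = 1" if "cmod z = 1" for z using unit_mult_cnj[OF that] by (simp add: mult.commute)
  then show ?thesis unfolding unitary_def cadj_bd bd_mult using assms unit_mult_cnj by (simp add: bd_one)
qed

lemma reI: "Re (x * \<i> * y) = - Im (x * y)" "Re (x * - \<i> * y) = Im (x * y)"
  by (simp_all add: algebra_simps)

lemma ifz: "\<not>P \<Longrightarrow> \<not>Q \<Longrightarrow> (if P then x else if Q then y else 0) = (0::complex)"
  by simp

lemma core:
  assumes u: "cmod d1 = 1" "cmod d2 = 1" "cmod d3 = 1" "cmod d4 = 1"
  shows "gen_thermal_unitary (bd d1 d2 d3 d4) \<longleftrightarrow>
    (\<exists>a b. a \<noteq> b \<and> Im (dsel d1 d2 d3 d4 a * cnj (dsel d1 d2 d3 d4 b)) = 0)"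
    (is "?L \<longleftrightarrow> ?R")
proof -
  let ?V = "bd d1 d2 d3 d4"
  let ?d = "dsel d1 d2 d3 d4"
  have mgW: "mg (?V ** K ** cadj ?V) $ a $ b = ?d a * mg K $ a $ b * cnj (?d b)" for K a b
    unfolding cadj_bd mg_conj dg_entry dsel_cnj ..
  show ?thesis
  proof
    assume ?L
    then obtain HA HA' HB HB' where h: "hermitian HA" "hermitian HA'" "hermitian HB" "hermitian HB'"
      "\<not> prop_id HA \<or> \<not> prop_id HB"
      and eq: "?V ** (kron HA (mat 1) + kron (mat 1) HB) ** cadj ?V = kron HA' (mat 1) + kron (mat 1) HB'"
      unfolding gen_thermal_unitary_def by blast
    let ?K = "kron HA (mat 1) + kron (mat 1) HB"
    have "\<exists>a b. a \<noteq> b \<and> mg ?K $ a $ b \<noteq> 0"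
    proof (rule ccontr)
      assume "\<not> (\<exists>a b. a \<noteq> b \<and> mg ?K $ a $ b \<noteq> 0)"
      then have "\<forall>a b. a \<noteq> b \<longrightarrow> mg ?K $ a $ b = 0" by blast
      from L1b[OF this] h(5) show False by simp
    qed
    then obtain a b where ab: "a \<noteq> b" "mg ?K $ a $ b \<noteq> 0" by blast
    have r0: "Re (mg ?K $ a $ b) = 0" using L1[OF h(1,3)] ab(1) unfolding locY_def by blast
    have r1: "Re (?d a * mg ?K $ a $ b * cnj (?d b)) = 0"
      using L1[OF h(2,4)] ab(1) unfolding locY_def eq[symmetric] mgW by blast
    define y where "y = Im (mg ?K $ a $ b)"
    have yy: "mg ?K $ a $ b = \<i> * of_real y" using r0 unfolding y_def by (simp add: complex_eq_iff)
    have "y \<noteq> 0" using ab(2) yy by auto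
    moreover have "y * Im (?d a * cnj (?d b)) = 0"
      using r1 unfolding yy by (simp add: algebra_simps) metis
    ultimately have "Im (?d a * cnj (?d b)) = 0" by simp
    then show ?R using ab(1) by blast
  next
    assume ?R
    then obtain a b where ab: "a \<noteq> b" and im: "Im (?d a * cnj (?d b)) = 0" by blast
    define Y0 :: qqmat where "Y0 = (\<chi> i j. if i = a \<and> j = b then \<i> else if i = b \<and> j = a then - \<i> else 0)"
    define K where "K = Qm ** Y0 ** cadj Qh"
    have mgK: "mg K = Y0" unfolding mg_def K_def
    proof -
      have "cadj Qh ** (Qm ** Y0 ** cadj Qh) ** Qm = (cadj Qh ** Qm) ** Y0 ** (cadj Qh ** Qm)"
        by (simp add: matrix_mul_assoc)
      then show "cadj Qh ** (Qm ** Y0 ** cadj Qh) ** Qm = Y0" by (simp add: QhQm)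
    qed
    have hY0: "hermitian Y0" unfolding hermitian_def Y0_def cadj_def using ab by (auto simp: vec_eq_iff)
    have hK: "hermitian K"
      using hY0 unfolding hermitian_def K_def
      by (simp add: cadj_mult matrix_mul_assoc Qm_Qh cadj_cscale cscale_mult_left cscale_mult_right)
    have lK: "locY (mg K)" unfolding mgK locY_def Y0_def using ab by auto
    obtain HA HB where hAB: "hermitian HA" "hermitian HB" and Keq: "K = kron HA (mat 1) + kron (mat 1) HB"
      using L2[OF hK lK] by blast
    have np: "\<not> prop_id HA \<or> \<not> prop_id HB"
    proof (rule ccontr)
      assume "\<not> (\<not> prop_id HA \<or> \<not> prop_id HB)"
      then have "prop_id HA" "prop_id HB" by blast+
      then have "mg K $ a $ b = 0" using L3[of HA HB a b] ab unfolding Keq by blast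
      then show False unfolding mgK Y0_def by simp
    qed
    let ?W = "?V ** K ** cadj ?V"
    have hW: "hermitian ?W" using hermitian_conj[OF hK] .
    have "?d b * cnj (?d a) = cnj (?d a * cnj (?d b))" by simp
    then have im2: "Im (?d b * cnj (?d a)) = 0" using im by (metis complex_cnj_zero_iff cnj.sel(2) neg_equal_0_iff_equal)
    have y0d: "Y0$i$i = 0" for i unfolding Y0_def using ab by auto
    have lW: "locY (mg ?W)" unfolding locY_def mgW mgK
    proof (intro conjI allI impI)
      fix i show "?d i * Y0 $ i $ i * cnj (?d i) = ?d (0,0) * Y0 $ (0,0) $ (0,0) * cnj (?d (0,0))"
        by (simp add: y0d)
    next
      fix i j :: "2\<times>2" assume "i \<noteq> j"
      show "Re (?d i * Y0 $ i $ j * cnj (?d j)) = 0"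
      proof (cases "i = a \<and> j = b")
        case True then show ?thesis using im by (simp add: Y0_def reI)
      next
        case F: False
        show ?thesis
        proof (cases "i = b \<and> j = a")
          case True then show ?thesis using im2 ab by (simp add: Y0_def reI)
        next
          case False
          have "Y0$i$j = 0" unfolding Y0_def vec_lambda_beta by (rule ifz[OF F False])
          then show ?thesis by simp
        qed
      qed
    qed
    obtain HA' HB' where hAB': "hermitian HA'" "hermitian HB'" and Weq: "?W = kron HA' (mat 1) + kron (mat 1) HB'"
      using L2[OF hW lW] by blast
    show ?L unfolding gen_thermal_unitary_def
      using unitary_bd[OF u] hAB hAB' np Weq unfolding Keq by blast
  qed
qed


definition thv :: "(nat \<Rightarrow> real) \<Rightarrow> 2\<times>2 \<Rightarrow> real" where
  "thv t a = (if a = (0,0) then t 1 - t 2 + t 3 else if a = (0,1) then - t 1 + t 2 + t 3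
     else if a = (1,0) then t 1 + t 2 - t 3 else - t 1 - t 2 - t 3)"

lemma ex22: "(\<exists>a::2\<times>2. P a) \<longleftrightarrow> P (0,0) \<or> P (0,1) \<or> P (1,0) \<or> P (1,1)"
  using forall22[of "\<lambda>a. \<not> P a"] by blast

lemma Pint: "(\<exists>n::int. u = of_int n * (pi/2)) \<longleftrightarrow> sin (2*u) = 0"
proof -
  have "(\<exists>n::int. u = of_int n * (pi/2)) \<longleftrightarrow> (\<exists>n::int. 2*u = of_int n * pi)"
    by (intro ex_cong1) (auto simp: field_simps)
  then show ?thesis by (simp add: sin_zero_iff_int2)
qed

lemma trig_final:
  fixes t :: "nat \<Rightarrow> real"
  shows "(\<exists>a b::2\<times>2. a \<noteq> b \<and> sin (thv t a - thv t b) = 0) \<longleftrightarrow>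
    (\<exists>j\<in>{1..3::nat}. \<exists>k\<in>{1..3::nat}. j \<noteq> k \<and>
               ((\<exists>n::int. t j - t k = of_int n * (pi / 2)) \<or>
                (\<exists>n::int. t j + t k = of_int n * (pi / 2))))"
proof -
  define c12m where "c12m = 2 * (t 1 - t 2)"
  define c12p where "c12p = 2 * (t 1 + t 2)"
  define c13m where "c13m = 2 * (t 1 - t 3)"
  define c13p where "c13p = 2 * (t 1 + t 3)"
  define c23m where "c23m = 2 * (t 2 - t 3)"
  define c23p where "c23p = 2 * (t 2 + t 3)"
  have e: "thv t (0,0) - thv t (0,1) = c12m" "thv t (0,1) - thv t (0,0) = - c12m"
    "thv t (0,0) - thv t (1,0) = - c23m" "thv t (1,0) - thv t (0,0) = c23m"
    "thv t (0,0) - thv t (1,1) = c13p" "thv t (1,1) - thv t (0,0) = - c13p"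
    "thv t (0,1) - thv t (1,0) = - c13m" "thv t (1,0) - thv t (0,1) = c13m"
    "thv t (0,1) - thv t (1,1) = c23p" "thv t (1,1) - thv t (0,1) = - c23p"
    "thv t (1,0) - thv t (1,1) = c12p" "thv t (1,1) - thv t (1,0) = - c12p"
    by (simp_all add: thv_def c12m_def c12p_def c13m_def c13p_def c23m_def c23p_def algebra_simps)
  have f: "2 * (t 1 - t 2) = c12m" "2 * (t 2 - t 1) = - c12m" "2 * (t 1 + t 2) = c12p" "2 * (t 2 + t 1) = c12p"
    "2 * (t 1 - t 3) = c13m" "2 * (t 3 - t 1) = - c13m" "2 * (t 1 + t 3) = c13p" "2 * (t 3 + t 1) = c13p"
    "2 * (t 2 - t 3) = c23m" "2 * (t 3 - t 2) = - c23m" "2 * (t 2 + t 3) = c23p" "2 * (t 3 + t 2) = c23p"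
    by (simp_all add: c12m_def c12p_def c13m_def c13p_def c23m_def c23p_def algebra_simps)
  have s3: "{1..3::nat} = {1,2,3}" by auto
  have L: "(\<exists>a b::2\<times>2. a \<noteq> b \<and> sin (thv t a - thv t b) = 0) \<longleftrightarrow>
     (sin c12m = 0 \<or> sin c12p = 0 \<or> sin c13m = 0 \<or> sin c13p = 0 \<or> sin c23m = 0 \<or> sin c23p = 0)"
    unfolding ex22 by (simp only: e sin_minus neg_equal_0_iff_equal prod.inject zero_ne_one2 simp_thms) blast
  have R: "(\<exists>j\<in>{1..3::nat}. \<exists>k\<in>{1..3::nat}. j \<noteq> k \<and>
               ((\<exists>n::int. t j - t k = of_int n * (pi / 2)) \<or>
                (\<exists>n::int. t j + t k = of_int n * (pi / 2)))) \<longleftrightarrow>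
     (sin c12m = 0 \<or> sin c12p = 0 \<or> sin c13m = 0 \<or> sin c13p = 0 \<or> sin c23m = 0 \<or> sin c23p = 0)"
    unfolding s3 Pint by (simp only: f bex_simps insert_iff empty_iff ball_simps sin_minus neg_equal_0_iff_equal simp_thms) (simp; blast)
  show ?thesis using L R by blast
qed


lemma kron_mult: "kron (A::qmat) (B::qmat) ** kron (C::qmat) (D::qmat) = kron (A ** C) (B ** D)"
  by (rule mat_eqI) (simp_all add: kron_def matrix_matrix_mult_def sum22 sum2' algebra_simps)

lemma unitary_mult: "unitary A \<Longrightarrow> unitary B \<Longrightarrow> unitary (A ** (B::complex^'n^'n))"
proof -
  assume a: "unitary A" and b: "unitary B"
  have "A ** B ** cadj (A ** B) = A ** (B ** cadj B) ** cadj A" by (simp add: cadj_mult matrix_mul_assoc)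
  moreover have "cadj (A ** B) ** (A ** B) = cadj B ** (cadj A ** A) ** B" by (simp add: cadj_mult matrix_mul_assoc)
  ultimately show ?thesis using a b unfolding unitary_def by simp
qed

lemma unitary_cadj: "unitary U \<Longrightarrow> unitary (cadj U)"
  unfolding unitary_def by simp

lemma unitary_kron: "unitary a \<Longrightarrow> unitary b \<Longrightarrow> unitary (kron (a::qmat) (b::qmat))"
proof -
  have k1: "kron (mat 1 :: qmat) (mat 1 :: qmat) = mat 1"
    by (rule mat_eqI) (simp_all add: kron_def mat_def)
  assume "unitary a" "unitary b"
  then show ?thesis unfolding unitary_def cadj_kron kron_mult by (simp add: k1)
qed

lemma kron_mat1: "kron (mat 1 :: qmat) (mat 1 :: qmat) = mat 1"
  by (rule mat_eqI) (simp_all add: kron_def mat_def)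

lemma loc_conj:
  fixes a b H G :: qmat
  assumes "unitary a" "unitary b"
  shows "kron a b ** (kron H (mat 1) + kron (mat 1) G) ** cadj (kron a b)
    = kron (a ** H ** cadj a) (mat 1) + kron (mat 1) (b ** G ** cadj (b::qmat))"
proof -
  have "a ** cadj a = mat 1" "b ** cadj b = mat 1" using assms unfolding unitary_def by auto
  then show ?thesis
    unfolding cadj_kron matrix_add_ldistrib matrix_add_rdistrib' kron_mult
    by (simp add: matrix_mul_assoc)
qed

lemma prop_conj:
  assumes u: "unitary u"
  shows "prop_id (u ** H ** cadj u) \<longleftrightarrow> prop_id (H::qmat)"
proof
  assume "prop_id (u ** H ** cadj u)"
  then obtain c where h: "u ** H ** cadj u = cscale c (mat 1)" unfolding prop_id_def by blast
  have "H = cadj u ** (u ** H ** cadj u) ** u"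
  proof -
    have "cadj u ** (u ** H ** cadj u) ** u = (cadj u ** u) ** H ** (cadj u ** u)"
      by (simp add: matrix_mul_assoc)
    then show ?thesis using u unfolding unitary_def by simp
  qed
  also have "\<dots> = cscale c (mat 1)" unfolding h using u unfolding unitary_def
    by (simp add: cscale_mult_left cscale_mult_right)
  finally show "prop_id H" unfolding prop_id_def by blast
next
  assume "prop_id H"
  then obtain c where h: "H = cscale c (mat 1)" unfolding prop_id_def by blast
  have "u ** H ** cadj u = cscale c (mat 1)" unfolding h using u unfolding unitary_def
    by (simp add: cscale_mult_left cscale_mult_right)
  then show "prop_id (u ** H ** cadj u)" unfolding prop_id_def by blast
qed

lemma G1:
  fixes a b c d :: qmat and V :: qqmat
  assumes ua: "unitary a" and ub: "unitary b" and uc: "unitary c" and ud: "unitary d"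
    and th: "gen_thermal_unitary V"
  shows "gen_thermal_unitary (kron a b ** V ** kron c (d::qmat))"
proof -
  obtain HA HA' HB HB' where h: "hermitian HA" "hermitian HA'" "hermitian HB" "hermitian HB'"
      "\<not> prop_id HA \<or> \<not> prop_id HB" and uV: "unitary V"
      and eq: "V ** (kron HA (mat 1) + kron (mat 1) HB) ** cadj V = kron HA' (mat 1) + kron (mat 1) HB'"
    using th unfolding gen_thermal_unitary_def by blast
  let ?U = "kron a b ** V ** kron c d"
  define HA2 where "HA2 = cadj c ** HA ** c"
  define HB2 where "HB2 = cadj d ** HB ** d"
  have uc': "unitary (cadj c)" and ud': "unitary (cadj d)" using uc ud unitary_cadj by blast+
  have hA2: "hermitian HA2" unfolding HA2_def using hermitian_conj[OF h(1), of "cadj c"] by simp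
  have hB2: "hermitian HB2" unfolding HB2_def using hermitian_conj[OF h(3), of "cadj d"] by simp
  have pA: "prop_id HA2 \<longleftrightarrow> prop_id HA" unfolding HA2_def using prop_conj[OF uc', of HA] by simp
  have pB: "prop_id HB2 \<longleftrightarrow> prop_id HB" unfolding HB2_def using prop_conj[OF ud', of HB] by simp
  have cc: "c ** HA2 ** cadj c = HA" "d ** HB2 ** cadj d = HB"
  proof -
    have "c ** HA2 ** cadj c = (c ** cadj c) ** HA ** (c ** cadj c)" unfolding HA2_def by (simp add: matrix_mul_assoc)
    then show "c ** HA2 ** cadj c = HA" using uc unfolding unitary_def by simp
    have "d ** HB2 ** cadj d = (d ** cadj d) ** HB ** (d ** cadj d)" unfolding HB2_def by (simp add: matrix_mul_assoc)
    then show "d ** HB2 ** cadj d = HB" using ud unfolding unitary_def by simp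
  qed
  have "?U ** (kron HA2 (mat 1) + kron (mat 1) HB2) ** cadj ?U
    = kron a b ** (V ** (kron c d ** (kron HA2 (mat 1) + kron (mat 1) HB2) ** cadj (kron c d)) ** cadj V) ** cadj (kron a b)"
    by (simp add: cadj_mult matrix_mul_assoc)
  also have "\<dots> = kron (a ** HA' ** cadj a) (mat 1) + kron (mat 1) (b ** HB' ** cadj b)"
    unfolding loc_conj[OF uc ud] cc eq loc_conj[OF ua ub] ..
  finally have E: "?U ** (kron HA2 (mat 1) + kron (mat 1) HB2) ** cadj ?U = kron (a ** HA' ** cadj a) (mat 1) + kron (mat 1) (b ** HB' ** cadj b)" .
  have uU: "unitary ?U" using unitary_mult unitary_kron ua ub uc ud uV by metis
  show ?thesis unfolding gen_thermal_unitary_def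
    using uU hA2 hB2 hermitian_conj[OF h(2), of a] hermitian_conj[OF h(4), of b] h(5) pA pB E by blast
qed

lemma G:
  assumes uA: "unitary uA" and uB: "unitary uB" and vA: "unitary vA" and vB: "unitary vB"
  shows "gen_thermal_unitary (kron uA uB ** V ** kron (cadj vA) (cadj vB)) \<longleftrightarrow> gen_thermal_unitary (V::qqmat)"
proof
  assume th: "gen_thermal_unitary (kron uA uB ** V ** kron (cadj vA) (cadj vB))"
  have "kron (cadj uA) (cadj uB) ** (kron uA uB ** V ** kron (cadj vA) (cadj vB)) ** kron vA vB
     = kron (cadj uA ** uA) (cadj uB ** uB) ** V ** kron (cadj vA ** vA) (cadj vB ** vB)"
    by (simp add: matrix_mul_assoc kron_mult flip: kron_mult)
  also have "\<dots> = V" using uA uB vA vB unfolding unitary_def by (simp add: kron_mat1)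
  finally have e: "kron (cadj uA) (cadj uB) ** (kron uA uB ** V ** kron (cadj vA) (cadj vB)) ** kron vA vB = V" .
  show "gen_thermal_unitary V"
    using G1[OF unitary_cadj[OF uA] unitary_cadj[OF uB] vA vB th] unfolding e .
next
  assume "gen_thermal_unitary V"
  then show "gen_thermal_unitary (kron uA uB ** V ** kron (cadj vA) (cadj vB))"
    using G1[OF uA uB unitary_cadj[OF vA] unitary_cadj[OF vB]] by blast
qed


lemma dsel_cis: "dsel (cis (t 1 - t 2 + t 3)) (cis (- t 1 + t 2 + t 3)) (cis (t 1 + t 2 - t 3)) (cis (- t 1 - t 2 - t 3)) a
  = cis (thv t a)"
  by (simp add: dsel_def thv_def)

theorem theorem5:
  fixes uA uB vA vB :: "complex^2^2" and t :: "nat \<Rightarrow> real"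
  assumes "unitary uA" and "unitary uB" and "unitary vA" and "unitary vB"
  shows "gen_thermal_unitary
           (kron uA uB
            ** mexp (\<Sum>k\<in>{1..3}. cscale (\<i> * complex_of_real (t k)) (kron (pauli k) (pauli k)))
            ** kron (cadj vA) (cadj vB))
         \<longleftrightarrow> (\<exists>j\<in>{1..3::nat}. \<exists>k\<in>{1..3::nat}. j \<noteq> k \<and>
               ((\<exists>n::int. t j - t k = of_int n * (pi / 2)) \<or>
                (\<exists>n::int. t j + t k = of_int n * (pi / 2))))"
proof -
  have HV: "mexp (\<Sum>k\<in>{1..3}. cscale (\<i> * complex_of_real (t k)) (kron (pauli k) (pauli k)))
     = bd (cis (t 1 - t 2 + t 3)) (cis (- t 1 + t 2 + t 3)) (cis (t 1 + t 2 - t 3)) (cis (- t 1 - t 2 - t 3))"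
    unfolding H_bd mexp_bd by (simp add: cis_conv_exp)
  have "gen_thermal_unitary
           (kron uA uB
            ** mexp (\<Sum>k\<in>{1..3}. cscale (\<i> * complex_of_real (t k)) (kron (pauli k) (pauli k)))
            ** kron (cadj vA) (cadj vB)) \<longleftrightarrow>
     gen_thermal_unitary (bd (cis (t 1 - t 2 + t 3)) (cis (- t 1 + t 2 + t 3)) (cis (t 1 + t 2 - t 3)) (cis (- t 1 - t 2 - t 3)))"
    unfolding HV using G[OF assms] .
  also have "\<dots> \<longleftrightarrow> (\<exists>a b::2\<times>2. a \<noteq> b \<and> Im (cis (thv t a) * cnj (cis (thv t b))) = 0)"
    by (subst core) (simp_all only: norm_cis dsel_cis)
  also have "\<dots> \<longleftrightarrow> (\<exists>a b::2\<times>2. a \<noteq> b \<and> sin (thv t a - thv t b) = 0)"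
    by (simp add: cis_cnj cis_mult)
  also have "\<dots> \<longleftrightarrow> (\<exists>j\<in>{1..3::nat}. \<exists>k\<in>{1..3::nat}. j \<noteq> k \<and>
               ((\<exists>n::int. t j - t k = of_int n * (pi / 2)) \<or>
                (\<exists>n::int. t j + t k = of_int n * (pi / 2))))"
    by (rule trig_final)
  finally show ?thesis .
qed

end
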